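(* Let $\mathcal{C}\subseteq\mathbb{F}_3^{11}$ be the ternary Golay code, with length $n=11$, dimension $k=6$ and minimum distance $d=5$. Then $$\mathbb{E}[\mathcal{C}] = n(H_n-H_{d-1}) - \frac{\binom{n}{k} - \frac{W_k(\mathcal{C}^\perp)}{2}}{\binom{n-1}{k}} \approx 8.416,$$ where $W_6(\mathcal{C}^\perp)=132$.
   Context: The ternary Golay code is a linear $[11,6,5]$ code over $\mathbb{F}_3$ (unique up to equivalence); its homogeneous weight enumerator is $X^{11}+132X^6Y^5+132X^5Y^6+330X^3Y^8+110X^2Y^9+24Y^{11}$. $\mathcal{C}^\perp$ is its dual code (standard inner product) and $W_i(\mathcal{D})$ denotes the number of codewords of Hamming weight $i$ in a code $\mathcal{D}$. $H_m=\sum_{i=1}^m 1/i$. $\mathbb{E}[\mathcal{C}]$ is $\mathbb{E}[G]$ for any generator matrix $G\in\mathbb{F}_3^{6\times 11}$, the expected number of draws when columns of $G$ are drawn independently and uniformly at random from its $11$ columns (with repetition) until the drawn columns span $\mathbb{F}_3^6$. *)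

theory Defs
  imports "HOL-Analysis.Analysis" "HOL-Library.Numeral_Type"
begin

text \<open>F_3 is the numeral type 3 (integers mod 3, a ring of characteristic 3,
 i.e. the field with three elements). Vectors in F_3^n are elements of 3^n.\<close>

definition hweight :: "'a::zero ^ 'n \<Rightarrow> nat" where
  "hweight x = card {i. x $ i \<noteq> 0}"

definition hdist :: "'a ^ 'n \<Rightarrow> 'a ^ 'n \<Rightarrow> nat" where
  "hdist x y = card {i. x $ i \<noteq> y $ i}"

definition linear_code :: "('a::comm_ring_1 ^ 'n) set \<Rightarrow> bool" where
  "linear_code C \<longleftrightarrow> 0 \<in> C \<and> (\<forall>x\<in>C. \<forall>y\<in>C. x + y \<in> C) \<and> (\<forall>a x. x \<in> C \<longrightarrow> a *s x \<in> C)"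

definition min_dist :: "('a ^ 'n) set \<Rightarrow> nat" where
  "min_dist C = Min {hdist x y | x y. x \<in> C \<and> y \<in> C \<and> x \<noteq> y}"

definition dotp :: "'a::comm_ring_1 ^ 'n \<Rightarrow> 'a ^ 'n \<Rightarrow> 'a" where
  "dotp x y = (\<Sum>i\<in>UNIV. x $ i * y $ i)"

definition dual_code :: "('a::comm_ring_1 ^ 'n) set \<Rightarrow> ('a ^ 'n) set" where
  "dual_code C = {y. \<forall>x\<in>C. dotp x y = 0}"

definition W :: "nat \<Rightarrow> ('a::zero ^ 'n) set \<Rightarrow> nat" where
  "W i D = card {x \<in> D. hweight x = i}"

definition generator_matrix :: "'a::comm_ring_1 ^ 'n ^ 'k \<Rightarrow> ('a ^ 'n) set \<Rightarrow> bool" where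
  "generator_matrix G C \<longleftrightarrow>
     C = {(\<Sum>r\<in>UNIV. c $ r *s G $ r) | c. True} \<and>
     (\<forall>c. (\<Sum>r\<in>UNIV. c $ r *s G $ r) = 0 \<longrightarrow> c = 0)"

definition column :: "'a ^ 'n ^ 'k \<Rightarrow> 'n \<Rightarrow> 'a ^ 'k" where
  "column G j = (\<chi> r. G $ r $ j)"

definition cols_span :: "'a::comm_ring_1 ^ 'n ^ 'k \<Rightarrow> 'n list \<Rightarrow> bool" where
  "cols_span G xs \<longleftrightarrow>
     (\<forall>v. \<exists>c :: nat \<Rightarrow> 'a. v = (\<Sum>i<length xs. c i *s column G (xs ! i)))"

text \<open>Probability that the number T of draws (uniform i.i.d. column indices) equals t:
 the first t draws span, the first t-1 do not.\<close>
definition prob_T :: "'a::comm_ring_1 ^ 'n::finite ^ 'k \<Rightarrow> nat \<Rightarrow> real" where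
  "prob_T G t = real (card {xs :: 'n list. length xs = t \<and> cols_span G xs \<and> \<not> cols_span G (butlast xs)})
                / real (CARD('n)) ^ t"

definition expected_draws :: "'a::comm_ring_1 ^ 'n::finite ^ 'k \<Rightarrow> real" where
  "expected_draws G = (\<Sum>t. real t * prob_T G t)"

end

theory Submission
  imports Defs
begin


lemma F3_cases: "(x::3) = 0 \<or> x = 1 \<or> x = -1"
proof (cases x)
  case (of_int z)
  then have "z = 0 \<or> z = 1 \<or> z = 2" by auto
  then show ?thesis using of_int by auto
qed

lemma F3_sq: "(a::3) \<noteq> 0 \<Longrightarrow> a * a = 1"
  using F3_cases[of a] by auto

lemma F3_neg_eq: "(a::3) = - a \<Longrightarrow> a = 0"
  using F3_cases[of a] by auto

lemma F3_UNIV: "(UNIV::3 set) = {0,1,-1}" using F3_cases by auto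

lemma dotp_comm: "dotp x y = dotp y x"
  unfolding dotp_def by (simp add: mult.commute)

lemma dotp_add_right: "dotp u (x + y) = dotp u x + dotp u y"
  unfolding dotp_def by (simp add: distrib_left sum.distrib)

lemma dotp_smult_right: "dotp u (a *s x) = a * dotp u x"
  unfolding dotp_def by (simp add: sum_distrib_left algebra_simps)

lemma dotp_zero_right[simp]: "dotp u 0 = 0"
  unfolding dotp_def by simp

lemma dotp_zero_left[simp]: "dotp 0 u = 0"
  unfolding dotp_def by simp

lemma dotp_sum_right: "dotp u (\<Sum>j\<in>S. f j) = (\<Sum>j\<in>S. dotp u (f j))"
  unfolding dotp_def by (simp add: sum_component sum_distrib_left sum.swap[of _ S])

lemma dotp_axis: "dotp u (axis i 1) = u $ i"
  unfolding dotp_def axis_def by (simp add: if_distrib cong: if_cong)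

lemma lc_diff: "linear_code V \<Longrightarrow> x \<in> V \<Longrightarrow> y \<in> V \<Longrightarrow> x + a *s y \<in> V"
  unfolding linear_code_def by blast

lemma card_filter_sum: "finite A \<Longrightarrow> card {x\<in>A. P x} = (\<Sum>x\<in>A. if P x then 1 else 0)"
  by (simp add: sum.If_cases Int_def)

lemma fact1:
  fixes V :: "(3 ^ 'k) set"
  assumes lc: "linear_code V" and w0W: "w0 \<in> V" and nz: "dotp u w0 \<noteq> 0"
  shows "card V = 3 * card {w\<in>V. dotp u w = 0}"
proof -
  define w1 where "w1 = dotp u w0 *s w0"
  have w1W: "w1 \<in> V" using lc w0W unfolding linear_code_def w1_def by blast
  have d1: "dotp u w1 = 1" unfolding w1_def dotp_smult_right using F3_sq[OF nz] .
  define Z where "Z = {w\<in>V. dotp u w = 0}"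
  have fin: "finite Z" by simp
  have eq: "V = Z \<union> (\<lambda>z. z + w1) ` Z \<union> (\<lambda>z. z + (-1) *s w1) ` Z"
  proof (intro equalityI subsetI)
    fix w assume wW: "w \<in> V"
    consider "dotp u w = 0" | "dotp u w = 1" | "dotp u w = -1" using F3_cases by blast
    then show "w \<in> Z \<union> (\<lambda>z. z + w1) ` Z \<union> (\<lambda>z. z + (-1) *s w1) ` Z"
    proof cases
      case 1 then show ?thesis using wW by (auto simp: Z_def)
    next
      case 2
      have "w + (-1) *s w1 \<in> Z" using lc_diff[OF lc wW w1W] 2 d1
        by (simp add: Z_def dotp_add_right dotp_smult_right)
      moreover have "w = (w + (-1) *s w1) + w1" by (simp add: vec_eq_iff)
      ultimately show ?thesis by blast
    next
      case 3
      have "w + w1 \<in> V" using lc_diff[OF lc wW w1W, of 1] by simp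
      then have "w + 1 *s w1 \<in> Z" using 3 d1
        by (simp add: Z_def dotp_add_right dotp_smult_right)
      moreover have "w = (w + 1 *s w1) + (-1) *s w1" by (simp add: vec_eq_iff)
      ultimately show ?thesis by blast
    qed
  next
    fix w assume "w \<in> Z \<union> (\<lambda>z. z + w1) ` Z \<union> (\<lambda>z. z + (-1) *s w1) ` Z"
    then show "w \<in> V"
      using lc_diff[OF lc _ w1W, of _ 1] lc_diff[OF lc _ w1W, of _ "-1"] by (auto simp: Z_def)
  qed
  have disj1: "Z \<inter> (\<lambda>z. z + w1) ` Z = {}"
    using d1 by (auto simp: Z_def dotp_add_right)
  have a1: "\<forall>x \<in> Z \<union> (\<lambda>z. z + w1) ` Z. dotp u x \<noteq> -1"
    using d1 by (auto simp: Z_def dotp_add_right)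
  have a2: "\<forall>x \<in> (\<lambda>z. z + (-1) *s w1) ` Z. dotp u x = -1"
    using d1 by (auto simp: Z_def dotp_add_right dotp_smult_right)
  have disj2: "(Z \<union> (\<lambda>z. z + w1) ` Z) \<inter> (\<lambda>z. z + (-1) *s w1) ` Z = {}"
    using a1 a2 by blast
  have c1: "card ((\<lambda>z. z + w1) ` Z) = card Z" by (rule card_image) (auto simp: inj_on_def)
  have c2: "card ((\<lambda>z. z + (-1) *s w1) ` Z) = card Z" by (rule card_image) (auto simp: inj_on_def)
  have "card V = card (Z \<union> (\<lambda>z. z + w1) ` Z) + card ((\<lambda>z. z + (-1) *s w1) ` Z)"
    by (subst eq, rule card_Un_disjoint) (use disj2 in auto)
  also have "card (Z \<union> (\<lambda>z. z + w1) ` Z) = card Z + card Z"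
    using card_Un_disjoint[OF fin _ disj1] c1 by simp
  finally show ?thesis using c2 unfolding Z_def by simp
qed

lemma lc_UNIV: "linear_code (UNIV :: ('a::comm_ring_1 ^ 'k) set)"
  unfolding linear_code_def by simp

lemma card_orth_point:
  fixes w :: "3 ^ 'k"
  assumes "w \<noteq> 0"
  shows "3 * card {u. dotp u w = 0} = CARD(3 ^ 'k)"
proof -
  obtain i where i: "w $ i \<noteq> 0" using assms by (auto simp: vec_eq_iff)
  have "dotp w (axis i 1) \<noteq> 0" using i by (simp add: dotp_axis)
  from fact1[OF lc_UNIV _ this] show ?thesis by (simp add: dotp_comm)
qed

lemma orth_full:
  fixes V :: "(3 ^ 'k) set"
  assumes lc: "linear_code V" and orth: "\<And>u. (\<forall>w\<in>V. dotp u w = 0) \<Longrightarrow> u = 0"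
  shows "V = UNIV"
proof -
  define M where "M = card V"
  define N where "N = CARD(3 ^ 'k)"
  have zW: "0 \<in> V" using lc unfolding linear_code_def by blast
  have M1: "M \<ge> 1" unfolding M_def using zW card_0_eq[of V] by (cases "card V") auto
  have dc: "(\<Sum>u\<in>UNIV. card {w\<in>V. dotp u w = 0}) = (\<Sum>w\<in>V. card {u. dotp u w = 0})"
  proof -
    have "(\<Sum>u\<in>UNIV. card {w\<in>V. dotp u w = 0}) = (\<Sum>u\<in>UNIV. \<Sum>w\<in>V. if dotp u w = 0 then 1 else 0)"
      by (simp add: card_filter_sum)
    also have "\<dots> = (\<Sum>w\<in>V. \<Sum>u\<in>UNIV. if dotp u w = 0 then 1 else 0)"
      by (rule sum.swap)
    also have "\<dots> = (\<Sum>w\<in>V. card {u\<in>UNIV. dotp u w = 0})"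
      by (simp only: card_filter_sum[OF finite])
    also have "\<dots> = (\<Sum>w\<in>V. card {u. dotp u w = 0})" by simp
    finally show ?thesis .
  qed
  have L: "3 * (\<Sum>u\<in>UNIV. card {w\<in>V. dotp u w = 0}) = (\<Sum>u::3^'k\<in>UNIV. if u = 0 then 3 * M else M)"
    unfolding sum_distrib_left
  proof (rule sum.cong[OF refl])
    fix u :: "3^'k"
    show "3 * card {w\<in>V. dotp u w = 0} = (if u = 0 then 3 * M else M)"
    proof (cases "u = 0")
      case True then show ?thesis by (simp add: M_def)
    next
      case False
      then obtain w0 where "w0 \<in> V" "dotp u w0 \<noteq> 0" using orth by blast
      from fact1[OF lc this] False show ?thesis by (simp add: M_def)
    qed
  qed
  have R: "3 * (\<Sum>w\<in>V. card {u. dotp u w = 0}) = (\<Sum>w\<in>V. if w = 0 then 3 * N else N)"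
    unfolding sum_distrib_left
  proof (rule sum.cong[OF refl])
    fix w :: "3^'k"
    show "3 * card {u. dotp u w = 0} = (if w = 0 then 3 * N else N)"
      using card_orth_point[of w] by (simp add: N_def)
  qed
  have sL: "(\<Sum>u::3^'k\<in>UNIV. if u = 0 then 3 * M else M) = 3 * M + (N - 1) * M"
  proof -
    have "(\<Sum>u::3^'k\<in>UNIV. if u = 0 then 3 * M else M) = (\<Sum>u\<in>insert 0 (UNIV - {0}). if u = (0::3^'k) then 3 * M else M)"
      by (simp add: insert_Diff_single)
    also have "\<dots> = 3 * M + (\<Sum>u\<in>UNIV - {0}. if u = (0::3^'k) then 3 * M else M)"
      by (subst sum.insert) auto
    also have "(\<Sum>u\<in>UNIV - {0}. if u = (0::3^'k) then 3 * M else M) = (N - 1) * M"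
      by (simp add: N_def card_Diff_singleton)
    finally show ?thesis .
  qed
  have sR: "(\<Sum>w\<in>V. if w = 0 then 3 * N else N) = 3 * N + (M - 1) * N"
  proof -
    have "(\<Sum>w\<in>V. if w = 0 then 3 * N else N) = (\<Sum>w\<in>insert 0 (V - {0}). if w = (0::3^'k) then 3 * N else N)"
      using zW by (simp add: insert_absorb)
    also have "\<dots> = 3 * N + (\<Sum>w\<in>V - {0}. if w = (0::3^'k) then 3 * N else N)"
      by (subst sum.insert) auto
    also have "(\<Sum>w\<in>V - {0}. if w = (0::3^'k) then 3 * N else N) = (M - 1) * N"
      using zW by (simp add: M_def card_Diff_singleton)
    finally show ?thesis .
  qed
  have N1: "N \<ge> 1" unfolding N_def by simp
  have "3 * M + (N - 1) * M = 3 * N + (M - 1) * N" using L R sL sR dc by simp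
  then have "int (3 * M + (N - 1) * M) = int (3 * N + (M - 1) * N)" by simp
  then have "3 * int M + (int N - 1) * int M = 3 * int N + (int M - 1) * int N"
    using M1 N1 by (simp add: of_nat_diff)
  then have "M = N" by (simp add: algebra_simps)
  then have "card V = card (UNIV :: (3^'k) set)" by (simp add: M_def N_def)
  then show ?thesis by (simp add: card_subset_eq)
qed


definition cw :: "'a::comm_ring_1 ^ 'n ^ 'k \<Rightarrow> 'a ^ 'k \<Rightarrow> 'a ^ 'n" where
  "cw G u = (\<Sum>r\<in>UNIV. u $ r *s G $ r)"

definition comb :: "'a::comm_ring_1 ^ 'n ^ 'k \<Rightarrow> 'n set \<Rightarrow> ('n \<Rightarrow> 'a) \<Rightarrow> 'a ^ 'k" where
  "comb G S a = (\<Sum>j\<in>S. a j *s column G j)"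

definition spanS :: "'a::comm_ring_1 ^ 'n ^ 'k \<Rightarrow> 'n set \<Rightarrow> bool" where
  "spanS G S \<longleftrightarrow> (\<forall>v. \<exists>a. v = comb G S a)"

lemma sum_smult: "(\<Sum>i\<in>A. f i) *s (x::'a::comm_ring_1^'n) = (\<Sum>i\<in>A. f i *s x)"
  by (simp add: vec_eq_iff sum_component sum_distrib_right)

lemma cw_nth: "cw G u $ j = dotp u (column G j)"
  unfolding cw_def dotp_def column_def by (simp add: sum_component)

lemma cols_span_spanS:
  fixes G :: "'a::comm_ring_1 ^ 'n::finite ^ 'k"
  shows "cols_span G xs \<longleftrightarrow> spanS G (set xs)"
proof
  assume cs: "cols_span G xs"
  show "spanS G (set xs)" unfolding spanS_def
  proof
    fix v
    obtain c where c: "v = (\<Sum>i<length xs. c i *s column G (xs ! i))"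
      using cs unfolding cols_span_def by blast
    define a where "a j = (\<Sum>i\<in>{i\<in>{..<length xs}. xs ! i = j}. c i)" for j
    have "comb G (set xs) a = (\<Sum>j\<in>set xs. \<Sum>i\<in>{i\<in>{..<length xs}. xs ! i = j}. c i *s column G (xs ! i))"
      unfolding comb_def a_def sum_smult by (intro sum.cong refl) auto
    also have "\<dots> = (\<Sum>i<length xs. c i *s column G (xs ! i))"
      by (rule sum.group) auto
    finally have "v = comb G (set xs) a" using c by simp
    then show "\<exists>a. v = comb G (set xs) a" by blast
  qed
next
  assume sp: "spanS G (set xs)"
  show "cols_span G xs" unfolding cols_span_def
  proof
    fix v
    have "\<exists>a. v = comb G (set xs) a" using sp unfolding spanS_def by simp
    then obtain a where a: "v = comb G (set xs) a" ..
    define L where "L j = (LEAST k. xs ! k = j)" for j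
    define c where "c i = (if i = L (xs ! i) then a (xs ! i) else 0)" for i
    have Lin: "L j \<in> {i\<in>{..<length xs}. xs ! i = j}" if "j \<in> set xs" for j
    proof -
      have "\<exists>k. k < length xs \<and> xs ! k = j" using that by (simp add: in_set_conv_nth)
      then obtain k where k: "k < length xs" "xs ! k = j" by auto
      have "xs ! L j = j" unfolding L_def by (rule LeastI[of _ k]) (use k in auto)
      moreover have "L j \<le> k" unfolding L_def by (rule Least_le) (use k in auto)
      ultimately show ?thesis using k by auto
    qed
    have "(\<Sum>i<length xs. c i *s column G (xs ! i))
        = (\<Sum>j\<in>set xs. \<Sum>i\<in>{i\<in>{..<length xs}. xs ! i = j}. c i *s column G (xs ! i))"
      by (rule sum.group[symmetric]) auto
    also have "\<dots> = (\<Sum>j\<in>set xs. a j *s column G j)"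
    proof (rule sum.cong[OF refl])
      fix j assume j: "j \<in> set xs"
      have "(\<Sum>i\<in>{i\<in>{..<length xs}. xs ! i = j}. c i *s column G (xs ! i))
          = (\<Sum>i\<in>{i\<in>{..<length xs}. xs ! i = j}. if i = L j then a j *s column G j else 0)"
        by (rule sum.cong) (auto simp: c_def)
      also have "\<dots> = a j *s column G j"
        using Lin[OF j] by (simp add: sum.delta)
      finally show "(\<Sum>i\<in>{i\<in>{..<length xs}. xs ! i = j}. c i *s column G (xs ! i)) = a j *s column G j" .
    qed
    finally have "v = (\<Sum>i<length xs. c i *s column G (xs ! i))"
      using a unfolding comb_def by simp
    then show "\<exists>c. v = (\<Sum>i<length xs. c i *s column G (xs ! i))" by blast
  qed
qed

lemma comb_lc: "linear_code (range (comb G S))"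
proof -
  have "comb G S (\<lambda>_. 0) = 0" unfolding comb_def by simp
  moreover have "comb G S a + comb G S b = comb G S (\<lambda>j. a j + b j)" for a b
    unfolding comb_def by (simp add: sum.distrib vector_sadd_rdistrib)
  moreover have "x *s comb G S a = comb G S (\<lambda>j. x * a j)" for x a
    unfolding comb_def by (simp add: vec_eq_iff sum_component sum_distrib_left algebra_simps)
  note h = calculation this
  show ?thesis unfolding linear_code_def
  proof (intro conjI ballI allI impI)
    have "0 = comb G S (\<lambda>_. 0)" using h(1) by simp
    then show "0 \<in> range (comb G S)" by blast
  next
    fix x y assume "x \<in> range (comb G S)" "y \<in> range (comb G S)"
    then obtain a b where "x = comb G S a" "y = comb G S b" by blast
    then have "x + y = comb G S (\<lambda>j. a j + b j)" using h(2) by simp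
    then show "x + y \<in> range (comb G S)" by blast
  next
    fix c x assume "x \<in> range (comb G S)"
    then obtain a where "x = comb G S a" by blast
    then have "c *s x = comb G S (\<lambda>j. c * a j)" using h(3) by simp
    then show "c *s x \<in> range (comb G S)" by blast
  qed
qed

lemma dotp_comb: "dotp u (comb G S a) = (\<Sum>j\<in>S. a j * dotp u (column G j))"
  unfolding comb_def by (simp add: dotp_sum_right dotp_smult_right)

lemma spanS_orth:
  fixes G :: "3 ^ 'n::finite ^ 'k"
  shows "spanS G S \<longleftrightarrow> (\<forall>u. (\<forall>j\<in>S. dotp u (column G j) = 0) \<longrightarrow> u = 0)"
proof
  assume sp: "spanS G S"
  show "\<forall>u. (\<forall>j\<in>S. dotp u (column G j) = 0) \<longrightarrow> u = 0"
  proof (intro allI impI)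
    fix u :: "3^'k" assume o: "\<forall>j\<in>S. dotp u (column G j) = 0"
    show "u = 0"
    proof (rule ccontr)
      assume "u \<noteq> 0"
      then obtain r where r: "u $ r \<noteq> 0" by (auto simp: vec_eq_iff)
      obtain a where "axis r 1 = comb G S a" using sp unfolding spanS_def by blast
      then have "dotp u (axis r 1) = dotp u (comb G S a)" by simp
      also have "\<dots> = 0" unfolding dotp_comb using o by simp
      finally show False using r by (simp add: dotp_axis)
    qed
  qed
next
  assume o: "\<forall>u. (\<forall>j\<in>S. dotp u (column G j) = 0) \<longrightarrow> u = 0"
  have "range (comb G S) = UNIV"
  proof (rule orth_full[OF comb_lc])
    fix u assume h: "\<forall>w\<in>range (comb G S). dotp u w = 0"
    have "dotp u (column G j) = 0" if "j \<in> S" for j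
    proof -
      have "dotp u (comb G S (\<lambda>j'. if j' = j then 1 else 0)) = 0" using h by blast
      moreover have "(\<Sum>j'\<in>S. (if j' = j then 1 else 0) * dotp u (column G j'))
          = (\<Sum>j'\<in>S. if j' = j then dotp u (column G j') else 0)"
        by (rule sum.cong) auto
      ultimately show ?thesis unfolding dotp_comb using that by simp
    qed
    then show "u = 0" using o by blast
  qed
  then show "spanS G S" unfolding spanS_def
  proof -
    assume r: "range (comb G S) = UNIV"
    show "\<forall>v. \<exists>a. v = comb G S a"
    proof
      fix v
      have "v \<in> range (comb G S)" using r by simp
      then show "\<exists>a. v = comb G S a" by blast
    qed
  qed
qed


definition supp :: "'a::zero ^ 'n \<Rightarrow> 'n set" where
  "supp x = {i. x $ i \<noteq> 0}"

lemma hweight_supp: "hweight x = card (supp x)"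
  unfolding hweight_def supp_def ..

lemma hdist_hweight: "hdist x y = hweight (x - (y::'a::ab_group_add ^ 'n))"
  unfolding hdist_def hweight_def by simp

lemma hdist_sym: "hdist x y = hdist y x"
  unfolding hdist_def by (metis (mono_tags) eq_commute)

lemma hdist_triangle:
  fixes x y z :: "'a ^ 'n::finite"
  shows "hdist x z \<le> hdist x y + hdist y z"
proof -
  have "{i. x $ i \<noteq> z $ i} \<subseteq> {i. x $ i \<noteq> y $ i} \<union> {i. y $ i \<noteq> z $ i}" by auto
  then have "card {i. x $ i \<noteq> z $ i} \<le> card ({i. x $ i \<noteq> y $ i} \<union> {i. y $ i \<noteq> z $ i})"
    by (intro card_mono) auto
  also have "\<dots> \<le> card {i. x $ i \<noteq> y $ i} + card {i. y $ i \<noteq> z $ i}" by (rule card_Un_le)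
  finally show ?thesis unfolding hdist_def .
qed

lemma hdist_zero: "hdist x (0::'a::zero^'n) = hweight x"
  unfolding hdist_def hweight_def by simp

definition mkv :: "'n set \<Rightarrow> ('n \<Rightarrow> 'a::zero) \<Rightarrow> 'a ^ 'n" where
  "mkv S g = (\<chi> i. if i \<in> S then g i else 0)"

lemma card_weight:
  fixes w :: nat
  shows "card {v :: 3 ^ 'n::finite. hweight v = w} = (CARD('n) choose w) * 2 ^ w"
proof -
  define A where "A = {S :: 'n set. card S = w}"
  define B where "B (S::'n set) = (S \<rightarrow>\<^sub>E ({1, -1} :: 3 set))" for S
  have Aeq: "A = {S. S \<subseteq> UNIV \<and> card S = w}" unfolding A_def by simp
  have cA: "card A = CARD('n) choose w" unfolding Aeq by (rule n_subsets) simp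
  have c2: "card ({1, -1} :: 3 set) = 2" by simp
  have cB: "card (B S) = 2 ^ card S" for S
    unfolding B_def by (simp add: card_PiE[OF finite] c2)
  have cS: "card (Sigma A B) = card A * 2 ^ w"
    by (simp add: card_SigmaI cB A_def)
  have img: "{v :: 3 ^ 'n. hweight v = w} = (\<lambda>(S, g). mkv S g) ` Sigma A B"
  proof (intro equalityI subsetI)
    fix v :: "3^'n" assume "v \<in> {v. hweight v = w}"
    then have hv: "card (supp v) = w" by (simp add: hweight_supp)
    have "(supp v, restrict (vec_nth v) (supp v)) \<in> Sigma A B"
      using hv F3_cases by (auto simp: A_def B_def supp_def)
    moreover have "v = mkv (supp v) (restrict (vec_nth v) (supp v))"
      by (simp add: mkv_def vec_eq_iff supp_def)
    ultimately show "v \<in> (\<lambda>(S, g). mkv S g) ` Sigma A B" by force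
  next
    fix v assume "v \<in> (\<lambda>(S, g). mkv S g) ` Sigma A B"
    then obtain S g where Sg: "S \<in> A" "g \<in> B S" "v = mkv S g" by auto
    have "supp v = S" using Sg(2,3) by (force simp: supp_def mkv_def B_def)
    then show "v \<in> {v. hweight v = w}" using Sg(1) by (simp add: hweight_supp A_def)
  qed
  have inj: "inj_on (\<lambda>(S, g). mkv S g) (Sigma A B)"
  proof (rule inj_onI, clarsimp)
    fix S g S' g'
    assume h: "S \<in> A" "g \<in> B S" "S' \<in> A" "g' \<in> B S'" "mkv S g = mkv S' g'"
    have sS: "supp (mkv S g) = S" using h(2) by (force simp: supp_def mkv_def B_def)
    have sS': "supp (mkv S' g') = S'" using h(4) by (force simp: supp_def mkv_def B_def)
    have SS: "S = S'" using sS sS' h(5) by simp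
    have "g i = g' i" for i
    proof (cases "i \<in> S")
      case True
      then show ?thesis using h(5) SS by (auto simp: mkv_def vec_eq_iff) (metis (mono_tags, lifting))
    next
      case False
      then show ?thesis using h(2,4) SS by (auto simp: B_def PiE_def extensional_def)
    qed
    then show "S = S' \<and> g = g'" using SS by auto
  qed
  show ?thesis unfolding img card_image[OF inj] cS cA ..
qed


lemma card_wle2: "card {v :: 3 ^ 11. hweight v \<le> 2} = 243"
proof -
  have eq: "{v :: 3 ^ 11. hweight v \<le> 2} = (\<Union>w\<in>{0,1,2}. {v. hweight v = w})" by auto
  have "card (\<Union>w\<in>{0,1,2::nat}. {v :: 3^11. hweight v = w}) = (\<Sum>w\<in>{0,1,2}. card {v :: 3^11. hweight v = w})"
    by (rule card_UN_disjoint) auto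
  also have "\<dots> = 243"
  proof -
    have "(11::nat) choose 2 = 55" by (simp add: numeral_eq_Suc)
    then show ?thesis by (simp add: card_weight)
  qed
  finally show ?thesis using eq by simp
qed

lemma card_ball: "card {v :: 3 ^ 11. hdist v c \<le> 2} = 243"
proof -
  have "{v :: 3 ^ 11. hdist v c \<le> 2} = (\<lambda>x. x + c) ` {v. hweight v \<le> 2}"
  proof (intro equalityI subsetI)
    fix v assume "v \<in> {v :: 3 ^ 11. hdist v c \<le> 2}"
    then have "v - c \<in> {v. hweight v \<le> 2}" by (simp add: hdist_hweight)
    moreover have "v = (v - c) + c" by simp
    ultimately show "v \<in> (\<lambda>x. x + c) ` {v. hweight v \<le> 2}" by (rule rev_image_eqI)
  qed (auto simp: hdist_hweight)
  moreover have "inj_on (\<lambda>x. x + c) {v. hweight v \<le> 2}" by (auto simp: inj_on_def)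
  ultimately show ?thesis by (simp add: card_image card_wle2)
qed

lemma ball3:
  fixes c :: "3 ^ 'n::finite"
  assumes c5: "hweight c = 5"
  shows "card {v. hweight v = 3 \<and> hdist v c \<le> 2} = 10"
proof -
  define F where "F T = mkv T (vec_nth c)" for T
  define TT where "TT = {T. T \<subseteq> supp c \<and> card T = 3}"
  have sF: "supp (F T) = T" if "T \<subseteq> supp c" for T
    using that by (auto simp: F_def mkv_def supp_def)
  have cTT: "card TT = 10"
  proof -
    have "card TT = card (supp c) choose 3" unfolding TT_def by (rule n_subsets) simp
    moreover have "(5::nat) choose 3 = 10" by (simp add: numeral_eq_Suc)
    ultimately show ?thesis using c5 by (simp add: hweight_supp)
  qed
  have img: "{v. hweight v = 3 \<and> hdist v c \<le> 2} = F ` TT"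
  proof (intro equalityI subsetI)
    fix v assume "v \<in> {v. hweight v = 3 \<and> hdist v c \<le> 2}"
    then have v3: "card (supp v) = 3" and dv: "card {i. v $ i \<noteq> c $ i} \<le> 2"
      by (auto simp: hweight_supp hdist_def)
    define A where "A = supp v"
    define B where "B = supp c"
    define D where "D = {i. v $ i \<noteq> c $ i}"
    have cB: "card B = 5" using c5 by (simp add: hweight_supp B_def)
    have sub1: "(A - B) \<union> (B - A) \<subseteq> D" by (auto simp: A_def B_def D_def supp_def)
    have "card (A - B) + card (B - A) = card ((A - B) \<union> (B - A))"
      by (rule card_Un_disjoint[symmetric]) auto
    also have "\<dots> \<le> card D" using sub1 by (intro card_mono) auto
    finally have s2: "card (A - B) + card (B - A) \<le> 2" using dv by (simp add: D_def)
    have "card (B - A) = card B - card (B \<inter> A)" by (rule card_Diff_subset_Int) simp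
    moreover have "card (B \<inter> A) \<le> card A" by (intro card_mono) auto
    ultimately have "card (B - A) \<ge> 2" using cB v3 by (simp add: A_def)
    then have cBA: "card (B - A) = 2" using s2 by linarith
    have cAB: "card (A - B) = 0" using s2 cBA by linarith
    have "A - B = {}" using cAB by (simp add: card_eq_0_iff)
    then have AB: "A \<subseteq> B" by auto
    have "B - A \<subseteq> D" using sub1 by auto
    moreover have "card D \<le> card (B - A)" using dv cBA by (simp add: D_def)
    ultimately have DBA: "D = B - A" by (intro card_seteq[symmetric]) auto
    have vFA: "v = F A"
    proof (subst vec_eq_iff, intro allI)
      fix i
      show "v $ i = F A $ i"
      proof (cases "i \<in> A")
        case True
        then have "i \<notin> D" using DBA by auto
        then show ?thesis using True by (simp add: D_def F_def mkv_def)
      next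
        case False
        then show ?thesis by (simp add: A_def supp_def F_def mkv_def)
      qed
    qed
    have ATT: "A \<in> TT" using AB v3 by (simp add: TT_def A_def B_def)
    show "v \<in> F ` TT" unfolding vFA by (rule imageI[OF ATT])
  next
    fix v assume "v \<in> F ` TT"
    then obtain T where vT: "v = F T" and "T \<in> TT" by (rule imageE)
    then have T1: "T \<subseteq> supp c" and T2: "card T = 3" by (simp_all add: TT_def)
    have sv: "supp v = T" using sF[OF T1] vT by simp
    have w: "hweight v = 3" using sv T2 by (simp add: hweight_supp)
    have "{i. v $ i \<noteq> c $ i} = supp c - T"
    proof (intro equalityI subsetI)
      fix i assume "i \<in> {i. v $ i \<noteq> c $ i}"
      then show "i \<in> supp c - T" using T1 by (cases "i \<in> T") (auto simp: vT F_def mkv_def supp_def)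
    next
      fix i assume "i \<in> supp c - T"
      then show "i \<in> {i. v $ i \<noteq> c $ i}" by (auto simp: vT F_def mkv_def supp_def)
    qed
    moreover have "card (supp c - T) = 2"
    proof -
      have "card (supp c - T) = card (supp c) - card T" using T1 by (simp add: card_Diff_subset)
      then show ?thesis using T2 c5 by (simp add: hweight_supp)
    qed
    ultimately show "v \<in> {v. hweight v = 3 \<and> hdist v c \<le> 2}" using w by (simp add: hdist_def)
  qed
  have inj: "inj_on F TT"
  proof (rule inj_onI)
    fix T T' assume "T \<in> TT" "T' \<in> TT" "F T = F T'"
    then have "T \<subseteq> supp c" "T' \<subseteq> supp c" by (auto simp: TT_def)
    then have e1: "supp (F T) = T" and e2: "supp (F T') = T'" by (simp_all add: sF)
    have "T = supp (F T)" using e1 by (rule sym)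
    also have "\<dots> = supp (F T')" using \<open>F T = F T'\<close> by (rule arg_cong)
    also have "\<dots> = T'" by (rule e2)
    finally show "T = T'" .
  qed
  have "card (F ` TT) = card TT" by (rule card_image[OF inj])
  then show ?thesis using img cTT by simp
qed

lemma F3_mult_nz: "(a::3) \<noteq> 0 \<Longrightarrow> b \<noteq> 0 \<Longrightarrow> a * b \<noteq> 0"
  using F3_cases[of a] F3_cases[of b] by auto

lemma pm_same_supp:
  fixes D :: "(3 ^ 'n::finite) set"
  assumes lc: "linear_code D" and x: "x \<in> D" and y: "y \<in> D" and xnz: "x \<noteq> 0"
    and ss: "supp y = supp x"
    and mw: "\<And>z. z \<in> D \<Longrightarrow> z \<noteq> 0 \<Longrightarrow> hweight z \<ge> hweight x"
  shows "y = x \<or> y = - x"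
proof -
  have "\<exists>j. x $ j \<noteq> 0" using xnz by (simp add: vec_eq_iff)
  then obtain j where j: "x $ j \<noteq> 0" ..
  have jx: "j \<in> supp x" using j by (simp add: supp_def)
  then have "j \<in> supp y" using ss by simp
  then have yj: "y $ j \<noteq> 0" by (simp add: supp_def)
  define l where "l = y $ j * x $ j"
  define d where "d = y + (- l) *s x"
  have dD: "d \<in> D" unfolding d_def by (rule lc_diff[OF lc y x])
  have "d $ j = y $ j + (- l) * x $ j" using d_def by simp
  also have "\<dots> = y $ j - y $ j * (x $ j * x $ j)" unfolding l_def by (simp add: mult.assoc)
  finally have dj: "d $ j = 0" using F3_sq[OF j] by simp
  have sd: "supp d \<subseteq> supp x - {j}"
  proof
    fix i assume i: "i \<in> supp d"
    have "i \<noteq> j" using i dj by (auto simp: supp_def)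
    moreover have "i \<in> supp x"
    proof (rule ccontr)
      assume "i \<notin> supp x"
      then have "i \<notin> supp y" using ss by simp
      then have "x $ i = 0" "y $ i = 0" using \<open>i \<notin> supp x\<close> by (simp_all add: supp_def)
      then have "d $ i = 0" using d_def by simp
      then show False using i by (simp add: supp_def)
    qed
    ultimately show "i \<in> supp x - {j}" by simp
  qed
  have c1: "card (supp d) \<le> card (supp x - {j})" using sd by (intro card_mono) auto
  have c2: "card (supp x - {j}) = card (supp x) - 1" using jx by (simp add: card_Diff_singleton)
  have c3: "card (supp x) \<ge> 1" using jx card_gt_0_iff[of "supp x"] by auto
  have "card (supp d) < card (supp x)" using c1 c2 c3 by linarith
  then have "\<not> (d \<noteq> 0)" using mw[OF dD] by (auto simp: hweight_supp)
  then have "d = 0" by simp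
  then have yl: "y = l *s x" unfolding d_def by (simp add: vec_eq_iff)
  have "l \<noteq> 0" unfolding l_def using F3_mult_nz[OF yj j] .
  then have "l = 1 \<or> l = -1" using F3_cases by blast
  then show ?thesis using yl by (auto simp: vec_eq_iff)
qed

lemma card_two_fibers:
  fixes D :: "(3 ^ 'n::finite) set"
  assumes lc: "linear_code D" and w1: "w \<ge> 1"
    and mw: "\<And>z. z \<in> D \<Longrightarrow> z \<noteq> 0 \<Longrightarrow> hweight z \<ge> w"
  shows "card {x\<in>D. hweight x = w} = 2 * card (supp ` {x\<in>D. hweight x = w})"
proof -
  define A where "A = {x\<in>D. hweight x = w}"
  have fib: "{x\<in>A. supp x = S} = {x0, - x0}" if "x0 \<in> A" "S = supp x0" for x0 S
  proof -
    have x0: "x0 \<in> D" "hweight x0 = w" using that by (auto simp: A_def)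
    have nz: "x0 \<noteq> 0" using x0 w1 by (auto simp: hweight_def)
    have "x0 + (-2) *s x0 \<in> D" by (rule lc_diff[OF lc x0(1) x0(1)])
    moreover have "x0 + (-2) *s x0 = - x0" by (simp add: vec_eq_iff algebra_simps)
    ultimately have "- x0 \<in> D" by simp
    moreover have "supp (- x0) = supp x0" by (auto simp: supp_def)
    moreover have "hweight (- x0) = w" using x0 by (simp add: hweight_supp supp_def)
    ultimately have "- x0 \<in> {x\<in>A. supp x = S}" using that by (simp add: A_def)
    moreover have "x \<in> {x0, - x0}" if "x \<in> A" "supp x = S" for x
      using pm_same_supp[OF lc x0(1), of x] that \<open>S = supp x0\<close> nz mw x0 by (auto simp: A_def)
    ultimately show ?thesis using \<open>x0 \<in> A\<close> \<open>S = supp x0\<close> by auto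
  qed
  have c2: "card {x\<in>A. supp x = S} = 2" if S: "S \<in> supp ` A" for S
  proof -
    obtain x0 where "S = supp x0" "x0 \<in> A" using S by (rule imageE)
    moreover have "x0 \<noteq> - x0"
    proof
      assume "x0 = - x0"
      then have "x0 = 0" by (auto simp: vec_eq_iff intro: F3_neg_eq)
      then show False using \<open>x0 \<in> A\<close> w1 by (auto simp: A_def hweight_def)
    qed
    ultimately show ?thesis using fib by simp
  qed
  have "A = (\<Union>S\<in>supp ` A. {x\<in>A. supp x = S})" by auto
  moreover have "card (\<Union>S\<in>supp ` A. {x\<in>A. supp x = S}) = (\<Sum>S\<in>supp ` A. card {x\<in>A. supp x = S})"
    by (rule card_UN_disjoint) auto
  ultimately have "card A = (\<Sum>S\<in>supp ` A. card {x\<in>A. supp x = S})" by simp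
  also have "\<dots> = (\<Sum>S\<in>supp ` A. 2)" using c2 by simp
  finally show ?thesis unfolding A_def by simp
qed


lemma card_F3: "CARD(3) = 3" by simp

lemma card_PiE_F3: "card (S \<rightarrow>\<^sub>E (UNIV :: 3 set)) = 3 ^ card (S :: 'n::finite set)"
  by (simp add: card_PiE[OF finite])

lemma comb_restrict: "comb G S a = comb G S (restrict a S)"
  unfolding comb_def by (rule sum.cong) auto

lemma range_comb: "range (comb G S) = comb G S ` (S \<rightarrow>\<^sub>E UNIV)"
proof (intro equalityI subsetI)
  fix v assume "v \<in> range (comb G S)"
  then obtain a where va: "v = comb G S a" by (rule rangeE)
  have "restrict a S \<in> S \<rightarrow>\<^sub>E UNIV" by simp
  have vr: "v = comb G S (restrict a S)" using va comb_restrict by metis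
  show "v \<in> comb G S ` (S \<rightarrow>\<^sub>E UNIV)" unfolding vr by (rule imageI) (auto simp: PiE_iff extensional_def)
qed auto

locale golay =
  fixes C :: "(3 ^ 11) set" and G :: "3 ^ 11 ^ 6"
  assumes lc: "linear_code C" and gm: "generator_matrix G C" and md: "min_dist C = 5"
begin

lemma C_eq: "C = range (cw G)"
  using gm unfolding generator_matrix_def cw_def by auto

lemma cw_inj0: "cw G u = 0 \<Longrightarrow> u = 0"
  using gm unfolding generator_matrix_def cw_def by blast

lemma cw_zero[simp]: "cw G 0 = 0" unfolding cw_def by simp

lemma cw_diff: "cw G (u - u') = cw G u - cw G u'"
  unfolding cw_def by (simp add: vector_sub_rdistrib sum_subtractf)

lemma inj_cw: "inj (cw G)"
proof (rule injI)
  fix u u' assume "cw G u = cw G u'"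
  then have "cw G (u - u') = 0" by (simp add: cw_diff)
  then have "u - u' = 0" by (rule cw_inj0)
  then show "u = u'" by simp
qed

lemma card_C: "card C = 729"
  unfolding C_eq card_image[OF inj_cw] by (simp add: CARD_vec)

lemma zero_C: "0 \<in> C" using lc unfolding linear_code_def by simp

lemma dist_ge:
  assumes "x \<in> C" "y \<in> C" "x \<noteq> y" shows "5 \<le> hdist x y"
proof -
  let ?M = "{hdist x y | x y. x \<in> C \<and> y \<in> C \<and> x \<noteq> y}"
  have hl: "hdist a b \<le> CARD(11)" for a b :: "3^11"
    unfolding hdist_def by (rule card_mono) auto
  have "?M \<subseteq> {..CARD(11)}" using hl by auto
  then have fin: "finite ?M" by (rule finite_subset) simp
  have "hdist x y \<in> ?M" using assms by auto
  then have "Min ?M \<le> hdist x y" using fin by (rule Min_le[rotated])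
  then show ?thesis using md unfolding min_dist_def by simp
qed

lemma wt_ge: "c \<in> C \<Longrightarrow> c \<noteq> 0 \<Longrightarrow> 5 \<le> hweight c"
  using dist_ge[of c 0] zero_C by (simp add: hdist_zero)

lemma spanS_code: "spanS G S \<longleftrightarrow> (\<forall>c\<in>C. c \<noteq> 0 \<longrightarrow> (\<exists>j\<in>S. c $ j \<noteq> 0))"
proof -
  have "spanS G S \<longleftrightarrow> (\<forall>u. (\<forall>j\<in>S. cw G u $ j = 0) \<longrightarrow> u = 0)"
    unfolding spanS_orth cw_nth ..
  also have "\<dots> \<longleftrightarrow> (\<forall>c\<in>C. c \<noteq> 0 \<longrightarrow> (\<exists>j\<in>S. c $ j \<noteq> 0))"
  proof
    assume h: "\<forall>u. (\<forall>j\<in>S. cw G u $ j = 0) \<longrightarrow> u = 0"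
    show "\<forall>c\<in>C. c \<noteq> 0 \<longrightarrow> (\<exists>j\<in>S. c $ j \<noteq> 0)"
    proof (intro ballI impI)
      fix c assume c: "c \<in> C" "c \<noteq> 0"
      from c(1) obtain u where cu: "c = cw G u" unfolding C_eq by (rule rangeE)
      show "\<exists>j\<in>S. c $ j \<noteq> 0"
      proof (rule ccontr)
        assume "\<not> (\<exists>j\<in>S. c $ j \<noteq> 0)"
        then have "\<forall>j\<in>S. cw G u $ j = 0" using cu by simp
        then have "u = 0" using h by simp
        then show False using c cu by simp
      qed
    qed
  next
    assume h: "\<forall>c\<in>C. c \<noteq> 0 \<longrightarrow> (\<exists>j\<in>S. c $ j \<noteq> 0)"
    show "\<forall>u. (\<forall>j\<in>S. cw G u $ j = 0) \<longrightarrow> u = 0"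
    proof (intro allI impI)
      fix u assume u: "\<forall>j\<in>S. cw G u $ j = 0"
      have "cw G u \<in> C" unfolding C_eq by simp
      then have "cw G u = 0" using h u by auto
      then show "u = 0" by (rule cw_inj0)
    qed
  qed
  finally show ?thesis .
qed

lemma spanS_mono: "spanS G S \<Longrightarrow> S \<subseteq> S' \<Longrightarrow> spanS G S'"
  unfolding spanS_code by blast

definition C5 where "C5 = {c\<in>C. hweight c = 5}"
definition Supp5 where "Supp5 = supp ` C5"

lemma spanS_small:
  assumes "card S \<le> 5" shows "\<not> spanS G S"
proof
  assume sp: "spanS G S"
  have "range (comb G S) = UNIV" using sp unfolding spanS_def by auto
  then have "card (UNIV :: (3^6) set) = card (comb G S ` (S \<rightarrow>\<^sub>E UNIV))" by (simp add: range_comb)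
  also have "\<dots> \<le> card (S \<rightarrow>\<^sub>E (UNIV :: 3 set))" by (rule card_image_le) simp
  also have "\<dots> = 3 ^ card S" by (rule card_PiE_F3)
  also have "\<dots> \<le> 3 ^ 5" using assms by (intro power_increasing) auto
  finally show False by (simp add: CARD_vec)
qed

lemma card_Compl11: "card (- S) = 11 - card (S :: 11 set)"
proof -
  have "card (- S) = card (UNIV - S)" by (simp add: Compl_eq_Diff_UNIV)
  also have "\<dots> = card (UNIV :: 11 set) - card S" by (rule card_Diff_subset) auto
  finally show ?thesis by simp
qed

lemma spanS_big:
  assumes "card S \<ge> 7" shows "spanS G S"
  unfolding spanS_code
proof (intro ballI impI)
  fix c assume c: "c \<in> C" "c \<noteq> 0"
  show "\<exists>j\<in>S. c $ j \<noteq> 0"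
  proof (rule ccontr)
    assume "\<not> (\<exists>j\<in>S. c $ j \<noteq> 0)"
    then have "supp c \<subseteq> - S" by (auto simp: supp_def)
    then have "card (supp c) \<le> card (- S)" by (intro card_mono) auto
    also have "\<dots> \<le> 4" using assms by (simp add: card_Compl11)
    finally show False using wt_ge[OF c] by (simp add: hweight_supp)
  qed
qed

lemma C5_wt: "A \<in> Supp5 \<Longrightarrow> card A = 5"
  unfolding Supp5_def C5_def by (auto simp: hweight_supp)

lemma spanS_6:
  assumes S6: "card S = 6" shows "spanS G S \<longleftrightarrow> - S \<notin> Supp5"
proof
  assume sp: "spanS G S"
  show "- S \<notin> Supp5"
  proof
    assume "- S \<in> Supp5"
    then obtain c where cs: "- S = supp c" and c5: "c \<in> C5" unfolding Supp5_def by (rule imageE)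
    have cC: "c \<in> C" and w: "hweight c = 5" using c5 by (auto simp: C5_def)
    have "c \<noteq> 0" using w by (auto simp: hweight_def)
    then have "\<exists>j\<in>S. c $ j \<noteq> 0" using sp cC unfolding spanS_code by blast
    then show False using cs by (auto simp: supp_def)
  qed
next
  assume ns: "- S \<notin> Supp5"
  show "spanS G S" unfolding spanS_code
  proof (intro ballI impI)
    fix c assume c: "c \<in> C" "c \<noteq> 0"
    show "\<exists>j\<in>S. c $ j \<noteq> 0"
    proof (rule ccontr)
      assume "\<not> (\<exists>j\<in>S. c $ j \<noteq> 0)"
      then have sub: "supp c \<subseteq> - S" by (auto simp: supp_def)
      have cS: "card (- S) = 5" using S6 by (simp add: card_Compl11)
      have "card (supp c) \<le> 5" using sub cS card_mono[of "- S" "supp c"] by simp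
      moreover have "card (supp c) \<ge> 5" using wt_ge[OF c] by (simp add: hweight_supp)
      ultimately have "card (supp c) = card (- S)" using cS by simp
      then have eq: "supp c = - S" using sub by (intro card_subset_eq) auto
      have "c \<in> C5" using c \<open>card (supp c) = card (- S)\<close> cS by (simp add: C5_def hweight_supp)
      then have "- S \<in> Supp5" unfolding Supp5_def eq[symmetric] by (rule imageI)
      then show False using ns by simp
    qed
  qed
qed

definition ball :: "3^11 \<Rightarrow> (3^11) set" where "ball c = {v. hdist v c \<le> 2}"

lemma ball_disj:
  assumes "c \<in> C" "c' \<in> C" "c \<noteq> c'" shows "ball c \<inter> ball c' = {}"
proof (rule ccontr)
  assume "ball c \<inter> ball c' \<noteq> {}"
  then obtain v where v: "v \<in> ball c" "v \<in> ball c'" by blast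
  have "hdist c c' \<le> hdist c v + hdist v c'" by (rule hdist_triangle)
  also have "\<dots> \<le> 4" using v by (simp add: ball_def hdist_sym[of c v])
  finally show False using dist_ge[OF assms] by simp
qed

lemma balls_cover: "(\<Union>c\<in>C. ball c) = UNIV"
proof -
  have "card (\<Union>c\<in>C. ball c) = (\<Sum>c\<in>C. card (ball c))"
  proof (rule card_UN_disjoint)
    show "\<forall>i\<in>C. \<forall>j\<in>C. i \<noteq> j \<longrightarrow> ball i \<inter> ball j = {}"
      using ball_disj by blast
  qed auto
  also have "\<dots> = (\<Sum>c\<in>C. 243)" by (simp add: ball_def card_ball)
  also have "\<dots> = card (UNIV :: (3^11) set)" using card_C by (simp add: CARD_vec)
  finally show ?thesis by (intro card_subset_eq) auto
qed

lemma card_C5: "card C5 = 132"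
proof -
  define W3 where "W3 = {v :: 3^11. hweight v = 3}"
  have "(11::nat) choose 3 = 165" by (simp add: numeral_eq_Suc)
  then have cW3: "card W3 = 1320" unfolding W3_def by (simp add: card_weight)
  have eq: "W3 = (\<Union>c\<in>C5. {v. hweight v = 3 \<and> hdist v c \<le> 2})"
  proof (intro equalityI subsetI)
    fix v assume "v \<in> W3"
    then have v3: "hweight v = 3" by (simp add: W3_def)
    have "v \<in> (\<Union>c\<in>C. ball c)" using balls_cover by simp
    then obtain c where cC: "c \<in> C" and vc: "v \<in> ball c" by (rule UN_E)
    have d: "hdist v c \<le> 2" using vc by (simp add: ball_def)
    have "c \<noteq> 0"
    proof
      assume "c = 0"
      then show False using d v3 by (simp add: hdist_zero)
    qed
    then have "5 \<le> hweight c" using wt_ge cC by simp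
    moreover have "hweight c \<le> 5"
    proof -
      have "hdist c 0 \<le> hdist c v + hdist v 0" by (rule hdist_triangle)
      then show ?thesis using d v3 by (simp add: hdist_zero hdist_sym[of c v])
    qed
    ultimately have "c \<in> C5" using cC by (simp add: C5_def)
    then show "v \<in> (\<Union>c\<in>C5. {v. hweight v = 3 \<and> hdist v c \<le> 2})" using v3 d by blast
  qed (auto simp: W3_def)
  have "card W3 = (\<Sum>c\<in>C5. card {v. hweight v = 3 \<and> hdist v c \<le> 2})"
  proof -
    have "card (\<Union>c\<in>C5. {v. hweight v = 3 \<and> hdist v c \<le> 2}) = (\<Sum>c\<in>C5. card {v. hweight v = 3 \<and> hdist v c \<le> 2})"
    proof (rule card_UN_disjoint)
      show "\<forall>i\<in>C5. \<forall>j\<in>C5. i \<noteq> j \<longrightarrow> {v. hweight v = 3 \<and> hdist v i \<le> 2} \<inter> {v. hweight v = 3 \<and> hdist v j \<le> 2} = {}"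
      proof (intro ballI impI)
        fix i j assume "i \<in> C5" "j \<in> C5" "i \<noteq> j"
        then have "ball i \<inter> ball j = {}" by (intro ball_disj) (auto simp: C5_def)
        then show "{v. hweight v = 3 \<and> hdist v i \<le> 2} \<inter> {v. hweight v = 3 \<and> hdist v j \<le> 2} = {}"
          by (auto simp: ball_def)
      qed
    qed auto
    then show ?thesis using eq by simp
  qed
  also have "\<dots> = (\<Sum>c\<in>C5. 10)" by (intro sum.cong refl ball3) (simp add: C5_def)
  finally show ?thesis using cW3 by simp
qed

lemma card_Supp5: "card Supp5 = 66"
proof -
  have "card C5 = 2 * card Supp5" unfolding C5_def Supp5_def
    by (rule card_two_fibers[OF lc]) (auto intro: wt_ge)
  then show ?thesis using card_C5 by simp
qed

end


lemma comb_nth: "comb G S a $ r = (\<Sum>j\<in>S. a j * G $ r $ j)"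
  unfolding comb_def column_def by (simp add: sum_component)

lemma comb_diff: "comb G S (\<lambda>j. a j - b j) = comb G S a - comb G S b"
  unfolding comb_def by (simp add: vector_sub_rdistrib sum_subtractf)

lemma comb_zero: "comb G S (\<lambda>_. 0) = 0"
  unfolding comb_def by simp

lemma dotp_cw_comb: "dotp (cw G u) y = dotp u (comb G UNIV (vec_nth y))"
proof -
  have "dotp (cw G u) y = (\<Sum>j\<in>UNIV. (\<Sum>r\<in>UNIV. u $ r * G $ r $ j) * y $ j)"
    unfolding dotp_def cw_def by (simp add: sum_component)
  also have "\<dots> = (\<Sum>j\<in>UNIV. \<Sum>r\<in>UNIV. u $ r * G $ r $ j * y $ j)"
    by (simp only: sum_distrib_right)
  also have "\<dots> = (\<Sum>r\<in>UNIV. \<Sum>j\<in>UNIV. u $ r * G $ r $ j * y $ j)"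
    by (rule sum.swap)
  also have "\<dots> = (\<Sum>r\<in>UNIV. u $ r * (\<Sum>j\<in>UNIV. y $ j * G $ r $ j))"
    by (simp add: sum_distrib_left mult_ac)
  also have "\<dots> = dotp u (comb G UNIV (vec_nth y))"
    unfolding dotp_def comb_nth ..
  finally show ?thesis .
qed

lemma comb_supp:
  assumes "supp y \<subseteq> S" shows "comb G UNIV (vec_nth y) = comb G S (vec_nth y)"
proof -
  have yz: "y $ i = 0" if "i \<notin> S" for i using assms that unfolding supp_def by blast
  have z: "\<forall>i\<in>UNIV - S. y $ i *s column G i = 0" using yz by simp
  show ?thesis unfolding comb_def by (rule sum.mono_neutral_right[OF _ _ z]) auto
qed

lemma spanS_inj6:
  fixes G :: "3 ^ 'n::finite ^ 6"
  assumes S6: "card S = 6"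
  shows "spanS G S \<longleftrightarrow> (\<forall>a. comb G S a = 0 \<longrightarrow> (\<forall>j\<in>S. a j = 0))"
proof -
  define P where "P = S \<rightarrow>\<^sub>E (UNIV :: 3 set)"
  have finP: "finite P" unfolding P_def by (rule finite_PiE) auto
  have cP: "card P = 729" unfolding P_def card_PiE_F3 S6 by simp
  have cU: "card (UNIV :: (3^6) set) = 729" by (simp add: CARD_vec)
  have sp_iff: "spanS G S \<longleftrightarrow> comb G S ` P = UNIV"
  proof
    assume sp: "spanS G S"
    show "comb G S ` P = UNIV"
    proof (intro equalityI subsetI)
      fix v :: "3^6"
      have "\<exists>a. v = comb G S a" using sp unfolding spanS_def by simp
      then have "v \<in> range (comb G S)" by auto
      then show "v \<in> comb G S ` P" unfolding range_comb P_def .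
    qed auto
  next
    assume r: "comb G S ` P = UNIV"
    show "spanS G S" unfolding spanS_def
    proof
      fix v :: "3^6"
      have "v \<in> comb G S ` P" using r by simp
      then have "v \<in> range (comb G S)" by auto
      then show "\<exists>a. v = comb G S a" by auto
    qed
  qed
  have inj_iff: "inj_on (comb G S) P \<longleftrightarrow> (\<forall>a. comb G S a = 0 \<longrightarrow> (\<forall>j\<in>S. a j = 0))"
  proof
    assume inj: "inj_on (comb G S) P"
    show "\<forall>a. comb G S a = 0 \<longrightarrow> (\<forall>j\<in>S. a j = 0)"
    proof (intro allI impI ballI)
      fix a j assume a0: "comb G S a = 0" and j: "j \<in> S"
      have m1: "restrict a S \<in> P" unfolding P_def by simp
      have m2: "restrict (\<lambda>_. 0) S \<in> P" unfolding P_def by simp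
      have "comb G S (restrict a S) = comb G S (restrict (\<lambda>_. 0) S)"
        using a0 comb_restrict[of G S a] comb_restrict[of G S "\<lambda>_. 0"] comb_zero[of G S] by simp
      then have "restrict a S = restrict (\<lambda>_. 0::3) S" by (rule inj_onD[OF inj _ m1 m2])
      then have "restrict a S j = restrict (\<lambda>_. 0::3) S j" by simp
      then show "a j = 0" using j by simp
    qed
  next
    assume k: "\<forall>a. comb G S a = 0 \<longrightarrow> (\<forall>j\<in>S. a j = 0)"
    show "inj_on (comb G S) P"
    proof (rule inj_onI)
      fix a b assume a: "a \<in> P" and b: "b \<in> P" and e: "comb G S a = comb G S b"
      have "comb G S (\<lambda>j. a j - b j) = 0" using e by (simp add: comb_diff)
      then have "\<forall>j\<in>S. a j - b j = 0" using k by blast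
      then show "a = b" using a b unfolding P_def by (intro PiE_ext) auto
    qed
  qed
  show ?thesis
  proof
    assume "spanS G S"
    then have "comb G S ` P = UNIV" using sp_iff by simp
    then have "card (comb G S ` P) = card P" using cP cU by simp
    then have "inj_on (comb G S) P" by (rule eq_card_imp_inj_on[OF finP])
    then show "\<forall>a. comb G S a = 0 \<longrightarrow> (\<forall>j\<in>S. a j = 0)" using inj_iff by simp
  next
    assume "\<forall>a. comb G S a = 0 \<longrightarrow> (\<forall>j\<in>S. a j = 0)"
    then have "inj_on (comb G S) P" using inj_iff by simp
    then have "card (comb G S ` P) = card (UNIV :: (3^6) set)" using cP cU by (simp add: card_image)
    then have "comb G S ` P = UNIV" by (intro card_subset_eq) auto
    then show "spanS G S" using sp_iff by simp
  qed
qed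

context golay begin

lemma dual_iff: "y \<in> dual_code C \<longleftrightarrow> comb G UNIV (vec_nth y) = 0"
proof
  assume y: "y \<in> dual_code C"
  have h: "dotp u (comb G UNIV (vec_nth y)) = 0" for u
  proof -
    have "cw G u \<in> C" unfolding C_eq by simp
    then have "dotp (cw G u) y = 0" using y unfolding dual_code_def by simp
    then show ?thesis by (simp add: dotp_cw_comb)
  qed
  show "comb G UNIV (vec_nth y) = 0"
  proof (subst vec_eq_iff, intro allI)
    fix r
    have "dotp (axis r 1) (comb G UNIV (vec_nth y)) = 0" by (rule h)
    moreover have "dotp (axis r 1) (comb G UNIV (vec_nth y)) = dotp (comb G UNIV (vec_nth y)) (axis r 1)"
      by (rule dotp_comm)
    ultimately show "comb G UNIV (vec_nth y) $ r = 0 $ r" by (simp add: dotp_axis)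
  qed
next
  assume z: "comb G UNIV (vec_nth y) = 0"
  show "y \<in> dual_code C" unfolding dual_code_def
  proof (intro CollectI ballI)
    fix x assume "x \<in> C"
    then obtain u where xu: "x = cw G u" unfolding C_eq by (rule rangeE)
    show "dotp x y = 0" unfolding xu dotp_cw_comb z by simp
  qed
qed

lemma dual_lc: "linear_code (dual_code C)"
  unfolding linear_code_def dual_code_def
  by (simp add: dotp_add_right dotp_smult_right)

lemma lemG:
  assumes c: "c \<in> C" and c': "c' \<in> C" and sc: "supp c = U - {a}" and sc': "supp c' = U - {b}"
    and aU: "a \<in> U" and bU: "b \<in> U" and ab: "a \<noteq> b" and cU: "card U = 6"
  shows False
proof -
  define R where "R = U - {a, b}"
  define E where "E l = {i\<in>R. c $ i \<noteq> l * c' $ i}" for l :: 3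
  have cR: "card R = 4"
  proof -
    have "card R = card U - card {a, b}" unfolding R_def using aU bU by (intro card_Diff_subset) auto
    then show ?thesis using cU ab by simp
  qed
  have nz: "c $ i \<noteq> 0" "c' $ i \<noteq> 0" if "i \<in> R" for i
  proof -
    have "i \<in> supp c" "i \<in> supp c'" using that sc sc' by (auto simp: R_def)
    then show "c $ i \<noteq> 0" "c' $ i \<noteq> 0" by (auto simp: supp_def)
  qed
  have disj: "E 1 \<inter> E (-1) = {}"
  proof (rule ccontr)
    assume "E 1 \<inter> E (-1) \<noteq> {}"
    then obtain i where i: "i \<in> E 1" "i \<in> E (-1)" by blast
    then have iR: "i \<in> R" and n1: "c $ i \<noteq> c' $ i" and n2: "c $ i \<noteq> - c' $ i" by (auto simp: E_def)
    show False using nz[OF iR] n1 n2 F3_cases[of "c $ i"] F3_cases[of "c' $ i"] by auto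
  qed
  have "card (E 1) + card (E (-1)) = card (E 1 \<union> E (-1))"
    using disj by (intro card_Un_disjoint[symmetric]) auto
  also have "\<dots> \<le> card R" by (intro card_mono) (auto simp: E_def)
  finally have s4: "card (E 1) + card (E (-1)) \<le> 4" using cR by simp
  have "\<exists>l. (l = 1 \<or> l = -1) \<and> card (E l) \<le> 2"
  proof (cases "card (E 1) \<le> 2")
    case True then show ?thesis by blast
  next
    case False then have "card (E (-1)) \<le> 2" using s4 by simp
    then show ?thesis by blast
  qed
  then obtain l where l: "l = 1 \<or> l = -1" and cl: "card (E l) \<le> 2" by blast
  have lnz: "l \<noteq> 0" using l by auto
  define c2 where "c2 = l *s c'"
  have c2C: "c2 \<in> C" using lc c' unfolding linear_code_def c2_def by blast
  have ca: "c $ a = 0" using sc by (auto simp: supp_def)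
  have c'a: "c' $ a \<noteq> 0" using sc' aU ab by (auto simp: supp_def)
  have "c2 $ a \<noteq> 0" unfolding c2_def using F3_mult_nz[OF lnz c'a] by simp
  then have ne: "c \<noteq> c2" using ca by auto
  have sub: "{i. c $ i \<noteq> c2 $ i} \<subseteq> {a, b} \<union> E l"
  proof
    fix i assume i: "i \<in> {i. c $ i \<noteq> c2 $ i}"
    show "i \<in> {a, b} \<union> E l"
    proof (cases "i \<in> U")
      case True
      then show ?thesis using i by (auto simp: E_def R_def c2_def)
    next
      case False
      then have "i \<notin> supp c" "i \<notin> supp c'" using sc sc' by auto
      then have "c $ i = 0" "c' $ i = 0" by (auto simp: supp_def)
      then show ?thesis using i by (simp add: c2_def)
    qed
  qed
  have "hdist c c2 \<le> card ({a, b} \<union> E l)" unfolding hdist_def using sub by (intro card_mono) auto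
  also have "\<dots> \<le> card {a, b} + card (E l)" by (rule card_Un_le)
  also have "\<dots> \<le> 4" using cl ab by simp
  finally show False using dist_ge[OF c c2C ne] by simp
qed

lemma dual_wt:
  assumes y: "y \<in> dual_code C" and ynz: "y \<noteq> 0"
  shows "6 \<le> hweight y"
proof (rule ccontr)
  assume "\<not> 6 \<le> hweight y"
  then have sy: "card (supp y) \<le> 5" by (simp add: hweight_supp)
  have "5 - card (supp y) \<le> card (- supp y)" using sy by (simp add: card_Compl11)
  then obtain R where R: "R \<subseteq> - supp y" "card R = 5 - card (supp y)"
    by (rule obtain_subset_with_card_n)
  define T where "T = supp y \<union> R"
  have cT: "card T = 5"
  proof -
    have "card T = card (supp y) + card R" unfolding T_def using R(1)
      by (intro card_Un_disjoint) auto
    then show ?thesis using R(2) sy by simp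
  qed
  have cCT: "card (- T) = 6" using cT by (simp add: card_Compl11)
  have key: "- T - {e} \<in> Supp5" if e: "e \<in> - T" for e
  proof -
    define S where "S = insert e T"
    have cS: "card S = 6" unfolding S_def using e cT by (simp add: card_insert_disjoint)
    have sub: "supp y \<subseteq> S" unfolding S_def T_def by auto
    have z0: "comb G UNIV (vec_nth y) = 0" using dual_iff y by simp
    have "comb G S (vec_nth y) = comb G UNIV (vec_nth y)" by (rule comb_supp[OF sub, symmetric])
    then have z: "comb G S (vec_nth y) = 0" using z0 by simp
    have "\<exists>j. y $ j \<noteq> 0" using ynz by (simp add: vec_eq_iff)
    then obtain j where j: "y $ j \<noteq> 0" ..
    have jS: "j \<in> S" using j sub by (auto simp: supp_def)
    have "\<not> spanS G S" unfolding spanS_inj6[OF cS] using z j jS by blast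
    then have "- S \<in> Supp5" using spanS_6[OF cS] by simp
    moreover have "- S = - T - {e}" unfolding S_def by auto
    ultimately show ?thesis by simp
  qed
  have "2 \<le> card (- T)" using cCT by simp
  then obtain AB where AB: "AB \<subseteq> - T" "card AB = 2" by (rule obtain_subset_with_card_n)
  have "\<exists>a b. AB = {a, b} \<and> a \<noteq> b" using AB(2) by (simp add: card_2_iff)
  then obtain a where "\<exists>b. AB = {a, b} \<and> a \<noteq> b" ..
  then obtain b where ab: "AB = {a, b} \<and> a \<noteq> b" ..
  have aT: "a \<in> - T" and bT: "b \<in> - T" using ab AB(1) by auto
  have "- T - {a} \<in> Supp5" by (rule key[OF aT])
  then obtain ca where ca: "- T - {a} = supp ca" "ca \<in> C5" unfolding Supp5_def by (rule imageE)
  have "- T - {b} \<in> Supp5" by (rule key[OF bT])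
  then obtain cb where cb: "- T - {b} = supp cb" "cb \<in> C5" unfolding Supp5_def by (rule imageE)
  show False
    by (rule lemG[of ca cb "- T" a b]) (use ca cb aT bT ab cCT in \<open>auto simp: C5_def\<close>)
qed

lemma W6_dual: "W 6 (dual_code C) = 132"
proof -
  define D6 where "D6 = {y \<in> dual_code C. hweight y = 6}"
  have c1: "card D6 = 2 * card (supp ` D6)" unfolding D6_def
    by (rule card_two_fibers[OF dual_lc]) (auto intro: dual_wt)
  have eq: "supp ` D6 = uminus ` Supp5"
  proof (intro equalityI subsetI)
    fix S assume "S \<in> supp ` D6"
    then obtain y where Sy: "S = supp y" and yD: "y \<in> D6" by (rule imageE)
    have y: "y \<in> dual_code C" and w6: "hweight y = 6" using yD by (auto simp: D6_def)
    have cS: "card S = 6" using w6 Sy by (simp add: hweight_supp)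
    have z0: "comb G UNIV (vec_nth y) = 0" using dual_iff y by simp
    have "comb G S (vec_nth y) = comb G UNIV (vec_nth y)" using Sy by (intro comb_supp[symmetric]) simp
    then have z: "comb G S (vec_nth y) = 0" using z0 by simp
    have "supp y \<noteq> {}" using cS Sy by auto
    then obtain j where j: "j \<in> supp y" by blast
    then have "y $ j \<noteq> 0" "j \<in> S" using Sy by (auto simp: supp_def)
    then have "\<not> spanS G S" unfolding spanS_inj6[OF cS] using z by blast
    then have "- S \<in> Supp5" using spanS_6[OF cS] by simp
    moreover have "S = - (- S)" by simp
    ultimately show "S \<in> uminus ` Supp5" by (rule rev_image_eqI)
  next
    fix S assume "S \<in> uminus ` Supp5"
    then obtain A where SA: "S = - A" and A: "A \<in> Supp5" by (rule imageE)
    have cS: "card S = 6" using C5_wt[OF A] SA by (simp add: card_Compl11)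
    have "- S \<in> Supp5" using SA A by simp
    then have "\<not> spanS G S" using spanS_6[OF cS] by simp
    then have "\<exists>a. comb G S a = 0 \<and> (\<exists>j\<in>S. a j \<noteq> 0)" unfolding spanS_inj6[OF cS] by blast
    then obtain a where a: "comb G S a = 0 \<and> (\<exists>j\<in>S. a j \<noteq> 0)" ..
    then obtain j where j: "j \<in> S" "a j \<noteq> 0" by blast
    define y where "y = mkv S a"
    have sub: "supp y \<subseteq> S" by (auto simp: y_def mkv_def supp_def)
    have "comb G UNIV (vec_nth y) = comb G S (vec_nth y)" by (rule comb_supp[OF sub])
    also have "\<dots> = comb G S a" unfolding comb_def
      by (rule sum.cong) (auto simp: y_def mkv_def)
    also have "\<dots> = 0" using a by simp
    finally have "comb G UNIV (vec_nth y) = 0" .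
    then have yd: "y \<in> dual_code C" using dual_iff by simp
    have "y $ j \<noteq> 0" using j by (simp add: y_def mkv_def)
    then have "y \<noteq> 0" by auto
    then have "6 \<le> card (supp y)" using dual_wt[OF yd] by (simp add: hweight_supp)
    moreover have "card (supp y) \<le> 6" using sub cS card_mono[of S "supp y"] by simp
    ultimately have csy: "card (supp y) = card S" using cS by simp
    then have sS: "supp y = S" using sub by (intro card_subset_eq) auto
    have "y \<in> D6" using yd csy cS by (simp add: D6_def hweight_supp)
    then have "supp y \<in> supp ` D6" by (rule imageI)
    then show "S \<in> supp ` D6" unfolding sS .
  qed
  have "inj_on uminus Supp5" by (rule inj_onI) simp
  then have "card (uminus ` Supp5) = 66" using card_Supp5 by (simp add: card_image)
  then show ?thesis using c1 eq unfolding W_def D6_def[symmetric] by simp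
qed

end


lemma fin_len: "finite {xs :: 'a::finite list. length xs = t}"
  using finite_lists_length_eq[of "UNIV::'a set" t] by simp

definition acnt :: "'a set \<Rightarrow> nat \<Rightarrow> nat" where
  "acnt S t = card {xs. length xs = t \<and> set xs = S}"

lemma acnt_le:
  fixes S :: "'a::finite set"
  shows "acnt S t \<le> card S ^ t"
proof -
  have "acnt S t \<le> card {xs. set xs \<subseteq> S \<and> length xs = t}" unfolding acnt_def
    by (rule card_mono) (auto intro: finite_lists_length_eq)
  also have "\<dots> = card S ^ t" by (rule card_lists_length_eq) simp
  finally show ?thesis .
qed

lemma acnt_empty: "acnt {} t = (if t = 0 then 1 else 0)"
proof (cases t)
  case 0
  then have "{xs. length xs = t \<and> set xs = ({}::'a set)} = {[]}" by auto
  then show ?thesis using 0 by (simp add: acnt_def)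
next
  case (Suc k)
  then have "{xs. length xs = t \<and> set xs = ({}::'a set)} = {}" by auto
  then show ?thesis using Suc by (simp add: acnt_def)
qed

lemma acnt_0: "S \<noteq> {} \<Longrightarrow> acnt S 0 = 0"
  unfolding acnt_def by auto

lemma acnt_Suc:
  fixes S :: "'a::finite set"
  shows "acnt S (Suc t) = card S * acnt S t + (\<Sum>x\<in>S. acnt (S - {x}) t)"
proof -
  define B where "B x = {ys. length ys = t \<and> (set ys = S \<or> set ys = S - {x})}" for x
  define F where "F p = fst p # snd p" for p :: "'a \<times> 'a list"
  have eq: "{xs. length xs = Suc t \<and> set xs = S} = F ` Sigma S B"
  proof (intro equalityI subsetI)
    fix xs assume "xs \<in> {xs. length xs = Suc t \<and> set xs = S}"
    then have l: "length xs = Suc t" and s: "set xs = S" by auto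
    have xs: "xs = hd xs # tl xs" using l by (cases xs) auto
    have s2: "insert (hd xs) (set (tl xs)) = S" using s xs by (metis list.simps(15))
    have hS: "hd xs \<in> S" using s2 by blast
    have "set (tl xs) = S \<or> set (tl xs) = S - {hd xs}"
    proof (cases "hd xs \<in> set (tl xs)")
      case True then show ?thesis using s2 by (simp add: insert_absorb)
    next
      case False then show ?thesis using s2 by auto
    qed
    moreover have "length (tl xs) = t" using l by simp
    ultimately have "(hd xs, tl xs) \<in> Sigma S B" using hS by (simp add: B_def)
    moreover have "xs = F (hd xs, tl xs)" using xs by (simp add: F_def)
    ultimately show "xs \<in> F ` Sigma S B" by (rule rev_image_eqI)
  next
    fix xs assume "xs \<in> F ` Sigma S B"
    then obtain p where p: "p \<in> Sigma S B" and xp: "xs = F p" by blast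
    then show "xs \<in> {xs. length xs = Suc t \<and> set xs = S}"
      by (cases p) (auto simp: F_def B_def)
  qed
  have inj: "inj_on F (Sigma S B)" by (rule inj_onI) (auto simp: F_def prod_eq_iff)
  have finB: "finite (B x)" for x
    by (rule finite_subset[OF _ fin_len[of t]]) (auto simp: B_def)
  have cB: "card (B x) = acnt S t + acnt (S - {x}) t" if x: "x \<in> S" for x
  proof -
    have "B x = {ys. length ys = t \<and> set ys = S} \<union> {ys. length ys = t \<and> set ys = S - {x}}"
      by (auto simp: B_def)
    moreover have "{ys. length ys = t \<and> set ys = S} \<inter> {ys. length ys = t \<and> set ys = S - {x}} = {}"
      using x by auto
    ultimately show ?thesis unfolding acnt_def
      by (simp add: card_Un_disjoint fin_len)
  qed
  have "acnt S (Suc t) = card (F ` Sigma S B)" unfolding acnt_def eq ..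
  also have "\<dots> = card (Sigma S B)" by (rule card_image[OF inj])
  also have "\<dots> = (\<Sum>x\<in>S. card (B x))" by (simp add: finB)
  also have "\<dots> = (\<Sum>x\<in>S. acnt S t + acnt (S - {x}) t)" by (rule sum.cong) (simp_all add: cB)
  also have "\<dots> = card S * acnt S t + (\<Sum>x\<in>S. acnt (S - {x}) t)" by (simp add: sum.distrib)
  finally show ?thesis .
qed

fun gam :: "nat \<Rightarrow> real" where
  "gam 0 = 1"
| "gam (Suc k) = real (Suc k) * gam k / (10 - real k)"

lemma acnt_sums:
  fixes S :: "11 set"
  assumes "card S \<le> 10"
  shows "(\<lambda>t. real (acnt S t) / 11 ^ t) sums gam (card S)"
proof -
  have "\<forall>S::11 set. card S = k \<longrightarrow> k \<le> 10 \<longrightarrow> (\<lambda>t. real (acnt S t) / 11 ^ t) sums gam k" for k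
  proof (induction k)
    case 0
    show ?case
    proof (intro allI impI)
      fix S :: "11 set" assume "card S = 0"
      then have "S = {}" by simp
      then have "(\<lambda>t. real (acnt S t) / 11 ^ t) = (\<lambda>t. if t = 0 then (\<lambda>_. 1) t else 0)"
        by (auto simp: acnt_empty)
      then show "(\<lambda>t. real (acnt S t) / 11 ^ t) sums gam 0" using sums_single[of 0 "\<lambda>_. 1::real"] by simp
    qed
  next
    case (Suc k)
    show ?case
    proof (intro allI impI)
      fix S :: "11 set" assume cS: "card S = Suc k" and k10: "Suc k \<le> 10"
      define r where "r t = real (acnt S t) / 11 ^ t" for t
      have Sne: "S \<noteq> {}" using cS by auto
      have IH: "(\<lambda>t. real (acnt (S - {x}) t) / 11 ^ t) sums gam k" if "x \<in> S" for x
        using Suc.IH that cS k10 by simp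
      have bound: "norm (r t) \<le> (real (card S) / 11) ^ t" for t
      proof -
        have "real (acnt S t) \<le> real (card S) ^ t" using acnt_le[of S t] by (simp add: of_nat_power[symmetric] del: of_nat_power)
        then show ?thesis unfolding r_def by (simp add: power_divide divide_right_mono)
      qed
      have "summable (\<lambda>t. (real (card S) / 11) ^ t)" using k10 cS by (intro summable_geometric) simp
      then have summ: "summable r" using bound by (rule summable_comparison_test'[of _ 0]) 
      define L where "L = suminf r"
      have rL: "r sums L" using summ unfolding L_def by (rule summable_sums)
      have r0: "r 0 = 0" using Sne by (simp add: r_def acnt_0)
      have h1: "(\<lambda>t. r (Suc t)) sums L" using rL r0 by (simp add: sums_Suc_iff)
      have rS: "r (Suc t) = (real (Suc k) * r t + (\<Sum>x\<in>S. real (acnt (S - {x}) t) / 11 ^ t)) / 11" for t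
        unfolding r_def acnt_Suc cS by (simp add: sum_divide_distrib[symmetric] field_simps)
      have "(\<lambda>t. (real (Suc k) * r t + (\<Sum>x\<in>S. real (acnt (S - {x}) t) / 11 ^ t)) / 11) sums
            ((real (Suc k) * L + (\<Sum>x\<in>S. gam k)) / 11)"
        by (intro sums_divide sums_add sums_mult rL sums_sum IH)
      then have h2: "(\<lambda>t. r (Suc t)) sums ((real (Suc k) * L + real (Suc k) * gam k) / 11)"
        using cS by (simp add: rS)
      have "L = (real (Suc k) * L + real (Suc k) * gam k) / 11" using h1 h2 by (rule sums_unique2)
      then have "L * (10 - real k) = real (Suc k) * gam k" by (simp add: field_simps)
      moreover have "10 - real k > 0" using k10 by simp
      ultimately have "L = gam (Suc k)" by (simp add: field_simps)
      then show "(\<lambda>t. real (acnt S t) / 11 ^ t) sums gam (Suc k)" using rL unfolding r_def[abs_def] by simp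
    qed
  qed
  then show ?thesis using assms by simp
qed


locale sploc =
  fixes sp :: "11 set \<Rightarrow> bool"
  assumes mono: "sp S \<Longrightarrow> S \<subseteq> S' \<Longrightarrow> sp S'"
    and small: "\<not> sp S \<Longrightarrow> card S \<le> 6"
begin

definition Nn where "Nn t = card {xs :: 11 list. length xs = t \<and> \<not> sp (set xs)}"
definition Q where "Q t = real (Nn t) / 11 ^ t"
definition pT where
  "pT t = real (card {xs :: 11 list. length xs = t \<and> sp (set xs) \<and> \<not> sp (set (butlast xs))}) / 11 ^ t"
definition NS where "NS = {S. \<not> sp S}"

lemma pT0: "pT 0 = 0"
proof -
  have "{xs :: 11 list. length xs = 0 \<and> sp (set xs) \<and> \<not> sp (set (butlast xs))} = {}" by auto
  then show ?thesis unfolding pT_def by simp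
qed

lemma card_butlast: "card {xs :: 11 list. length xs = Suc t \<and> \<not> sp (set (butlast xs))} = 11 * Nn t"
proof -
  define A where "A = {ys :: 11 list. length ys = t \<and> \<not> sp (set ys)}"
  define F where "F p = fst p @ [snd p]" for p :: "11 list \<times> 11"
  have eq: "{xs :: 11 list. length xs = Suc t \<and> \<not> sp (set (butlast xs))} = F ` (A \<times> UNIV)"
  proof (intro equalityI subsetI)
    fix xs :: "11 list" assume "xs \<in> {xs. length xs = Suc t \<and> \<not> sp (set (butlast xs))}"
    then have l: "length xs = Suc t" and n: "\<not> sp (set (butlast xs))" by auto
    have ne: "xs \<noteq> []" using l by auto
    have "(butlast xs, last xs) \<in> A \<times> UNIV" using l n by (simp add: A_def)
    moreover have "xs = F (butlast xs, last xs)" using ne by (simp add: F_def)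
    ultimately show "xs \<in> F ` (A \<times> UNIV)" by (rule rev_image_eqI)
  next
    fix xs assume "xs \<in> F ` (A \<times> UNIV)"
    then obtain p where p: "p \<in> A \<times> UNIV" and xp: "xs = F p" by blast
    then show "xs \<in> {xs. length xs = Suc t \<and> \<not> sp (set (butlast xs))}"
      by (cases p) (simp add: F_def A_def)
  qed
  have inj: "inj_on F (A \<times> UNIV)" by (rule inj_onI) (auto simp: F_def prod_eq_iff)
  have finA: "finite A" by (rule finite_subset[OF _ fin_len[of t]]) (auto simp: A_def)
  have "card {xs :: 11 list. length xs = Suc t \<and> \<not> sp (set (butlast xs))} = card (A \<times> (UNIV :: 11 set))"
    unfolding eq by (rule card_image[OF inj])
  also have "\<dots> = card A * 11" by (simp add: card_cartesian_product)
  finally show ?thesis by (simp add: A_def Nn_def)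
qed

lemma pT_Suc: "pT (Suc t) = Q t - Q (Suc t)"
proof -
  define X where "X = {xs :: 11 list. length xs = Suc t \<and> \<not> sp (set (butlast xs))}"
  define Y where "Y = {xs :: 11 list. length xs = Suc t \<and> \<not> sp (set xs)}"
  have YX: "Y \<subseteq> X"
  proof
    fix xs assume "xs \<in> Y"
    then have l: "length xs = Suc t" and n: "\<not> sp (set xs)" by (auto simp: Y_def)
    have "set (butlast xs) \<subseteq> set xs" by (auto dest: in_set_butlastD)
    then have "\<not> sp (set (butlast xs))" using n mono by blast
    then show "xs \<in> X" using l by (simp add: X_def)
  qed
  have finX: "finite X" by (rule finite_subset[OF _ fin_len[of "Suc t"]]) (auto simp: X_def)
  have eqT: "{xs :: 11 list. length xs = Suc t \<and> sp (set xs) \<and> \<not> sp (set (butlast xs))} = X - Y"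
    by (auto simp: X_def Y_def)
  have cX: "card X = 11 * Nn t" unfolding X_def by (rule card_butlast)
  have cY: "card Y = Nn (Suc t)" unfolding Y_def Nn_def ..
  have cT: "card (X - Y) = card X - card Y" using YX finX by (intro card_Diff_subset) (auto intro: finite_subset)
  have le: "card Y \<le> card X" using YX finX by (intro card_mono)
  have "pT (Suc t) = (real (11 * Nn t) - real (Nn (Suc t))) / 11 ^ Suc t"
    unfolding pT_def eqT cT using le cX cY by (simp add: of_nat_diff)
  also have "\<dots> = Q t - Q (Suc t)" unfolding Q_def by (simp add: field_simps)
  finally show ?thesis .
qed

lemma finNS: "finite NS" by simp

lemma Nn_sum: "Nn t = (\<Sum>S\<in>NS. acnt S t)"
proof -
  have eq: "{xs :: 11 list. length xs = t \<and> \<not> sp (set xs)} = (\<Union>S\<in>NS. {xs. length xs = t \<and> set xs = S})"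
    by (auto simp: NS_def)
  have "card (\<Union>S\<in>NS. {xs :: 11 list. length xs = t \<and> set xs = S}) = (\<Sum>S\<in>NS. card {xs. length xs = t \<and> set xs = S})"
    by (rule card_UN_disjoint) (auto intro: finite_subset[OF _ fin_len[of t]])
  then show ?thesis unfolding Nn_def eq acnt_def .
qed

lemma Q_sum: "Q t = (\<Sum>S\<in>NS. real (acnt S t) / 11 ^ t)"
  unfolding Q_def Nn_sum by (simp add: sum_divide_distrib)

lemma NS_card: "S \<in> NS \<Longrightarrow> card S \<le> 6"
  using small by (auto simp: NS_def)

lemma nx_lim: "(\<lambda>n. real n * (6/11::real) ^ n) \<longlonglongrightarrow> 0"
proof -
  have "summable (\<lambda>n. of_nat (Suc n) * (6/11::real) ^ n)"
    using geometric_deriv_sums[of "6/11::real"] by (auto intro: sums_summable)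
  then have "summable (\<lambda>n. real n * (6/11::real) ^ n)"
    by (rule summable_comparison_test'[of _ 0]) simp
  then show ?thesis by (rule summable_LIMSEQ_zero)
qed

lemma nQ_lim: "(\<lambda>n. real n * Q n) \<longlonglongrightarrow> 0"
proof -
  have e: "(\<lambda>n. real n * Q n) = (\<lambda>n. \<Sum>S\<in>NS. real n * (real (acnt S n) / 11 ^ n))"
    unfolding Q_sum by (simp add: sum_distrib_left)
  have each: "(\<lambda>n. real n * (real (acnt S n) / 11 ^ n)) \<longlonglongrightarrow> 0" if S: "S \<in> NS" for S
  proof (rule Lim_null_comparison[OF _ nx_lim])
    show "\<forall>\<^sub>F n in sequentially. norm (real n * (real (acnt S n) / 11 ^ n)) \<le> real n * (6 / 11) ^ n"
    proof (rule always_eventually, rule allI)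
      fix n
      have "acnt S n \<le> card S ^ n" by (rule acnt_le)
      also have "\<dots> \<le> 6 ^ n" using NS_card[OF S] by (intro power_mono) auto
      finally have "real (acnt S n) \<le> 6 ^ n" by (simp add: of_nat_power[symmetric] del: of_nat_power)
      then have "real (acnt S n) / 11 ^ n \<le> 6 ^ n / 11 ^ n" by (simp add: divide_right_mono)
      then have "real n * (real (acnt S n) / 11 ^ n) \<le> real n * (6 ^ n / 11 ^ n)"
        by (rule mult_left_mono) simp
      then have "real n * (real (acnt S n) / 11 ^ n) \<le> real n * (6 / 11) ^ n"
        by (simp only: power_divide)
      then show "norm (real n * (real (acnt S n) / 11 ^ n)) \<le> real n * (6 / 11) ^ n" by simp
    qed
  qed
  show ?thesis unfolding e by (rule tendsto_null_sum) (rule each)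
qed

lemma Q_sums: "Q sums (\<Sum>S\<in>NS. gam (card S))"
proof -
  have "(\<lambda>t. \<Sum>S\<in>NS. real (acnt S t) / 11 ^ t) sums (\<Sum>S\<in>NS. gam (card S))"
    by (rule sums_sum) (rule acnt_sums, use NS_card in force)
  then show ?thesis unfolding Q_sum[abs_def] .
qed

lemma partial: "(\<Sum>t<Suc n. real t * pT t) = (\<Sum>t<n. Q t) - real n * Q n"
proof (induction n)
  case 0 then show ?case by (simp add: pT0)
next
  case (Suc n)
  have "(\<Sum>t<Suc (Suc n). real t * pT t) = (\<Sum>t<Suc n. real t * pT t) + real (Suc n) * pT (Suc n)"
    by (rule sum.lessThan_Suc)
  also have "\<dots> = (\<Sum>t<n. Q t) - real n * Q n + real (Suc n) * (Q n - Q (Suc n))"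
    by (simp only: Suc.IH pT_Suc)
  also have "\<dots> = (\<Sum>t<Suc n. Q t) - real (Suc n) * Q (Suc n)" by (simp add: algebra_simps)
  finally show ?case .
qed

lemma E_sums: "(\<lambda>t. real t * pT t) sums (\<Sum>S\<in>NS. gam (card S))"
proof -
  define s where "s = (\<Sum>S\<in>NS. gam (card S))"
  have a: "(\<lambda>n. \<Sum>t<n. Q t) \<longlonglongrightarrow> s" using Q_sums unfolding s_def sums_def .
  have "(\<lambda>n. (\<Sum>t<n. Q t) - real n * Q n) \<longlonglongrightarrow> s - 0" by (intro tendsto_diff a nQ_lim)
  then have "(\<lambda>n. \<Sum>t<Suc n. real t * pT t) \<longlonglongrightarrow> s" unfolding partial by simp
  then have "(\<lambda>n. \<Sum>t<n. real t * pT t) \<longlonglongrightarrow> s" by (rule LIMSEQ_imp_Suc)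
  then show ?thesis unfolding s_def sums_def .
qed

end


lemma ch: "(11::nat) choose 6 = 462" "(10::nat) choose 6 = 210" by (simp_all add: numeral_eq_Suc)

lemma gv: "gam 1 = 1/10" "gam 2 = 1/45" "gam 3 = 1/120" "gam 4 = 1/210" "gam 5 = 1/252" "gam 6 = 1/210"
  by (simp_all add: numeral_eq_Suc)

lemma cv: "(11::nat) choose 1 = 11" "(11::nat) choose 2 = 55" "(11::nat) choose 3 = 165"
  "(11::nat) choose 4 = 330" "(11::nat) choose 5 = 462"
  by (simp_all add: numeral_eq_Suc)

lemma sum_NS_value:
  fixes Bad :: "11 set set"
  assumes B6: "Bad \<subseteq> {S. card S = 6}" and cB: "card Bad = 66"
  shows "(\<Sum>S\<in>{S. card S \<le> 5} \<union> Bad. gam (card S)) = 1 + 11/10 + 11/9 + 11/8 + 11/7 + 11/6 + 11/35"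
proof -
  have disj: "{S :: 11 set. card S \<le> 5} \<inter> Bad = {}" using B6 by auto
  have s1: "(\<Sum>S\<in>{S :: 11 set. card S \<le> 5}. gam (card S)) = (\<Sum>y\<in>{..5}. real (11 choose y) * gam y)"
  proof -
    have inner: "(\<Sum>S\<in>{x\<in>{S :: 11 set. card S \<le> 5}. card x = y}. gam (card S)) = real (11 choose y) * gam y"
      if y: "y \<in> {..5}" for y
    proof -
      have e: "{x\<in>{S :: 11 set. card S \<le> 5}. card x = y} = {B. B \<subseteq> UNIV \<and> card B = y}" using y by auto
      have "card {B :: 11 set. B \<subseteq> UNIV \<and> card B = y} = 11 choose y" using n_subsets[of "UNIV :: 11 set" y] by simp
      then show ?thesis unfolding e by simp
    qed
    have "(\<Sum>S\<in>{S :: 11 set. card S \<le> 5}. gam (card S))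
        = (\<Sum>y\<in>{..5}. \<Sum>S\<in>{x\<in>{S :: 11 set. card S \<le> 5}. card x = y}. gam (card S))"
      by (rule sum.group[symmetric]) auto
    also have "\<dots> = (\<Sum>y\<in>{..5}. real (11 choose y) * gam y)"
      by (rule sum.cong[OF refl]) (rule inner)
    finally show ?thesis .
  qed
  have s2: "(\<Sum>S\<in>Bad. gam (card S)) = 66 * gam 6"
  proof -
    have "(\<Sum>S\<in>Bad. gam (card S)) = (\<Sum>S\<in>Bad. gam 6)" using B6 by (intro sum.cong) auto
    then show ?thesis using cB by simp
  qed
  have "{..5::nat} = {0,1,2,3,4,5}" by auto
  then have s3: "(\<Sum>y\<in>{..5}. real (11 choose y) * gam y) + 66 * gam 6 = 1 + 11/10 + 11/9 + 11/8 + 11/7 + 11/6 + 11/35"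
    by (simp add: gv cv)
  show ?thesis using s1 s2 s3 disj by (simp add: sum.union_disjoint)
qed

theorem mainTheorem8:
  fixes C :: "(3 ^ 11) set" and G :: "3 ^ 11 ^ 6"
  assumes "linear_code C"
    and "generator_matrix G C"
    and "min_dist C = 5"
  shows "expected_draws G =
           11 * (harm 11 - harm (5 - 1))
           - (real (11 choose 6) - real (W 6 (dual_code C)) / 2) / real ((11 - 1) choose 6)
         \<and> W 6 (dual_code C) = 132
         \<and> \<bar>expected_draws G - 8.416\<bar> < 0.0005"
proof -
  interpret golay C G using assms by unfold_locales
  interpret sploc "spanS G"
  proof
    show "spanS G S'" if "spanS G S" "S \<subseteq> S'" for S S' using spanS_mono that .
    show "card S \<le> 6" if ns: "\<not> spanS G S" for S
    proof (rule ccontr)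
      assume "\<not> card S \<le> 6"
      then have "7 \<le> card S" by simp
      then have "spanS G S" by (rule spanS_big)
      with ns show False by simp
    qed
  qed
  have pT_eq: "prob_T G t = pT t" for t
  proof -
    have "{xs :: 11 list. length xs = t \<and> cols_span G xs \<and> \<not> cols_span G (butlast xs)}
        = {xs. length xs = t \<and> spanS G (set xs) \<and> \<not> spanS G (set (butlast xs))}"
      by (simp add: cols_span_spanS)
    then show ?thesis unfolding prob_T_def pT_def by simp
  qed
  define Bad where "Bad = {S :: 11 set. card S = 6 \<and> - S \<in> Supp5}"
  have NSeq: "NS = {S. card S \<le> 5} \<union> Bad"
  proof (intro equalityI subsetI)
    fix S assume "S \<in> NS"
    then have ns: "\<not> spanS G S" by (simp add: NS_def)
    have "card S \<le> 6" using ns small by blast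
    then consider "card S \<le> 5" | "card S = 6" by linarith
    then show "S \<in> {S. card S \<le> 5} \<union> Bad"
    proof cases
      case 1 then show ?thesis by simp
    next
      case 2 then show ?thesis using ns spanS_6[OF 2] by (simp add: Bad_def)
    qed
  next
    fix S assume "S \<in> {S. card S \<le> 5} \<union> Bad"
    then consider "card S \<le> 5" | "card S = 6" "- S \<in> Supp5" by (auto simp: Bad_def)
    then show "S \<in> NS"
    proof cases
      case 1 then show ?thesis using spanS_small by (simp add: NS_def)
    next
      case 2 then show ?thesis using spanS_6[OF 2(1)] by (simp add: NS_def)
    qed
  qed
  have Bad_img: "Bad = uminus ` Supp5"
  proof (intro equalityI subsetI)
    fix S assume "S \<in> Bad"
    then have "- S \<in> Supp5" by (simp add: Bad_def)
    moreover have "S = - (- S)" by simp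
    ultimately show "S \<in> uminus ` Supp5" by (rule rev_image_eqI)
  next
    fix S assume "S \<in> uminus ` Supp5"
    then obtain A where SA: "S = - A" and A: "A \<in> Supp5" by (rule imageE)
    have "card S = 6" using C5_wt[OF A] SA by (simp add: card_Compl11)
    then show "S \<in> Bad" using SA A by (simp add: Bad_def)
  qed
  have "inj_on uminus Supp5" by (rule inj_onI) simp
  then have cBad: "card Bad = 66" unfolding Bad_img using card_Supp5 by (simp add: card_image)
  have B6: "Bad \<subseteq> {S. card S = 6}" by (auto simp: Bad_def)
  have Ev: "expected_draws G = 1 + 11/10 + 11/9 + 11/8 + 11/7 + 11/6 + 11/35"
  proof -
    have "expected_draws G = (\<Sum>t. real t * pT t)" unfolding expected_draws_def pT_eq ..
    also have "\<dots> = (\<Sum>S\<in>NS. gam (card S))" using E_sums by (rule sums_unique[symmetric])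
    also have "\<dots> = 1 + 11/10 + 11/9 + 11/8 + 11/7 + 11/6 + 11/35"
      unfolding NSeq by (rule sum_NS_value[OF B6 cBad])
    finally show ?thesis .
  qed
  have W6: "W 6 (dual_code C) = 132" by (rule W6_dual)
  have R: "11 * (harm 11 - harm (5 - 1)) - (real (11 choose 6) - real (132::nat) / 2) / real ((11 - 1) choose 6)
      = (1 + 11/10 + 11/9 + 11/8 + 11/7 + 11/6 + 11/35 :: real)"
    by (simp add: ch harm_expand)
  have A: "\<bar>(1 + 11/10 + 11/9 + 11/8 + 11/7 + 11/6 + 11/35::real) - 8.416\<bar> < 0.0005"
    by simp
  show ?thesis
  proof (intro conjI)
    show "expected_draws G = 11 * (harm 11 - harm (5 - 1))
           - (real (11 choose 6) - real (W 6 (dual_code C)) / 2) / real ((11 - 1) choose 6)"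
      unfolding W6 Ev by (rule R[symmetric])
    show "W 6 (dual_code C) = 132" by (rule W6)
    show "\<bar>expected_draws G - 8.416\<bar> < 0.0005" unfolding Ev by (rule A)
  qed
qed


end
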